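(* Let $N\ge1$, $K\ge1$, $n_v\ge0$. Let $\mathbf{T}^{(1)},\mathbf{T}^{(2)}\in[0,1]^{K\times K}$ be irreducible aperiodic row-stochastic matrices, let $\mathbf{P}_1,\mathbf{P}_2$ be the corresponding global transition matrices and $\pi_1,\pi_2$ their stationary distributions (row vectors in $\mathbb{R}^{K^N}$). Then $\|\mathbf{P}_1-\mathbf{P}_2\|_1\le NK^{N-1}\min\{\|\mathbf{T}^{(1)}-\mathbf{T}^{(2)}\|_1,\;K\|\mathbf{T}^{(1)}-\mathbf{T}^{(2)}\|_{1,1}\}$ and $\|\mathbf{P}_1-\mathbf{P}_2\|_2\le N(KC_K)^{N/2}\|\mathbf{T}^{(1)}-\mathbf{T}^{(2)}\|_2$, where $C_K:=\max\{\max_{j\in[K]}\sum_{k\in[K]}(\mathbf{T}^{(1)}_{j,k})^2,\max_{j\in[K]}\sum_{k\in[K]}(\mathbf{T}^{(2)}_{j,k})^2\}\le1$. Also, there exists $\ell_0\in\mathbb{N}$ such that $\tau(\mathbf{P}_1^{\ell_0})<1$ and $\|\pi_1-\pi_2\|_1\le\frac{1+(\ell_0-1)K^N}{1-\tau(\mathbf{P}_1^{\ell_0})}\|\mathbf{P}_1-\mathbf{P}_2\|_1\le\frac{1+(\ell_0-1)K^N}{1-\tau(\mathbf{P}_1^{\ell_0})}NK^{N-1}\min\{\|\mathbf{T}^{(1)}-\mathbf{T}^{(2)}\|_1,\;K\|\mathbf{T}^{(1)}-\mathbf{T}^{(2)}\|_{1,1}\}$.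
   Context: Vertices $[N]=\{1,\dots,N\}$ are arranged on a cycle; for $n\in[N]$, $V_n\subset[N]$ is the set of residues modulo $N$ of $n-n_v,\dots,n+n_v$, and $|V_n|$ its cardinality. The global transition matrix associated with a row-stochastic $\mathbf{T}$ is $\mathbf{P}(x,y)=\prod_{n=1}^N \frac{1}{|V_n|}\sum_{i\in V_n}\mathbf{T}_{x_i,y_n}$, $x,y\in[K]^N$. For a matrix $\mathbf{A}$, $\|\mathbf{A}\|_p=(\sum_{i,j}|\mathbf{A}_{ij}|^p)^{1/p}$ (entrywise $\ell_p$ norm, also for vectors), and $\|\mathbf{A}\|_{1,1}=\sup_{\|\varphi\|_1\le1}\|\varphi\mathbf{A}\|_1$, the supremum over row vectors $\varphi$. For a stochastic matrix $\mathbf{A}$, $\tau(\mathbf{A}):=\frac12\max_{x,x'}\|\mathbf{A}(x,\cdot)-\mathbf{A}(x',\cdot)\|_1$. *)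

theory Defs
  imports Complex_Main "HOL-Library.FuncSet"
begin

text \<open>Vertices are [N] = {1..N}, states are [K] = {1..K}. Matrices indexed by a finite
  set S are functions of two arguments; only their values on S matter.\<close>

text \<open>V_n: residues mod N (represented in {1..N}) of n - n_v, ..., n + n_v.\<close>
definition cyc_nbhd :: "nat \<Rightarrow> nat \<Rightarrow> nat \<Rightarrow> nat set" where
  "cyc_nbhd N nv n = {nat ((int n + d - 1) mod int N) + 1 | d. d \<in> {- int nv .. int nv}}"

definition configs :: "nat \<Rightarrow> nat \<Rightarrow> (nat \<Rightarrow> nat) set" where
  "configs N K = PiE {1..N} (\<lambda>_. {1..K})"

definition global_P :: "nat \<Rightarrow> nat \<Rightarrow> (nat \<Rightarrow> nat \<Rightarrow> real) \<Rightarrow> (nat \<Rightarrow> nat) \<Rightarrow> (nat \<Rightarrow> nat) \<Rightarrow> real" where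
  "global_P N nv T x y =
     (\<Prod>n\<in>{1..N}. (1 / real (card (cyc_nbhd N nv n))) * (\<Sum>i\<in>cyc_nbhd N nv n. T (x i) (y n)))"

primrec matpow :: "'a set \<Rightarrow> ('a \<Rightarrow> 'a \<Rightarrow> real) \<Rightarrow> nat \<Rightarrow> 'a \<Rightarrow> 'a \<Rightarrow> real" where
  "matpow S A 0 = (\<lambda>i j. if i = j then 1 else 0)"
| "matpow S A (Suc m) = (\<lambda>i j. \<Sum>k\<in>S. matpow S A m i k * A k j)"

definition row_stochastic :: "'a set \<Rightarrow> ('a \<Rightarrow> 'a \<Rightarrow> real) \<Rightarrow> bool" where
  "row_stochastic S A \<longleftrightarrow> (\<forall>i\<in>S. \<forall>j\<in>S. 0 \<le> A i j \<and> A i j \<le> 1) \<and> (\<forall>i\<in>S. (\<Sum>j\<in>S. A i j) = 1)"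

definition irreducible_mat :: "'a set \<Rightarrow> ('a \<Rightarrow> 'a \<Rightarrow> real) \<Rightarrow> bool" where
  "irreducible_mat S A \<longleftrightarrow> (\<forall>i\<in>S. \<forall>j\<in>S. \<exists>m. matpow S A m i j > 0)"

definition aperiodic_mat :: "'a set \<Rightarrow> ('a \<Rightarrow> 'a \<Rightarrow> real) \<Rightarrow> bool" where
  "aperiodic_mat S A \<longleftrightarrow> (\<forall>i\<in>S. Gcd {m::nat. 0 < m \<and> matpow S A m i i > 0} = 1)"

definition stationary :: "'a set \<Rightarrow> ('a \<Rightarrow> 'a \<Rightarrow> real) \<Rightarrow> ('a \<Rightarrow> real) \<Rightarrow> bool" where
  "stationary S A p \<longleftrightarrow> (\<forall>x\<in>S. 0 \<le> p x) \<and> (\<Sum>x\<in>S. p x) = 1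
      \<and> (\<forall>y\<in>S. (\<Sum>x\<in>S. p x * A x y) = p y)"

definition ent_norm1 :: "'a set \<Rightarrow> ('a \<Rightarrow> 'a \<Rightarrow> real) \<Rightarrow> real" where
  "ent_norm1 S A = (\<Sum>i\<in>S. \<Sum>j\<in>S. \<bar>A i j\<bar>)"

definition ent_norm2 :: "'a set \<Rightarrow> ('a \<Rightarrow> 'a \<Rightarrow> real) \<Rightarrow> real" where
  "ent_norm2 S A = sqrt (\<Sum>i\<in>S. \<Sum>j\<in>S. (A i j)\<^sup>2)"

definition vec_norm1 :: "'a set \<Rightarrow> ('a \<Rightarrow> real) \<Rightarrow> real" where
  "vec_norm1 S v = (\<Sum>i\<in>S. \<bar>v i\<bar>)"

definition norm11 :: "'a set \<Rightarrow> ('a \<Rightarrow> 'a \<Rightarrow> real) \<Rightarrow> real" where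
  "norm11 S A = Sup {(\<Sum>j\<in>S. \<bar>\<Sum>i\<in>S. phi i * A i j\<bar>) | phi. (\<Sum>i\<in>S. \<bar>phi i\<bar>) \<le> 1}"

definition dob_tau :: "'a set \<Rightarrow> ('a \<Rightarrow> 'a \<Rightarrow> real) \<Rightarrow> real" where
  "dob_tau S A = (1/2) * Max {(\<Sum>j\<in>S. \<bar>A x j - A x' j\<bar>) | x x'. x \<in> S \<and> x' \<in> S}"

end

theory Submission
  imports Defs "HOL-Analysis.Analysis"
begin

lemma semigroup_mult:
  fixes A :: "nat set"
  assumes add: "\<And>a b. a \<in> A \<Longrightarrow> b \<in> A \<Longrightarrow> a + b \<in> A" and a: "a \<in> A" and k: "k \<ge> 1"
  shows "k * a \<in> A"
  using k
proof (induction k)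
  case 0 then show ?case by simp
next
  case (Suc k)
  show ?case
  proof (cases "k = 0")
    case True then show ?thesis using a by simp
  next
    case False then have "k * a \<in> A" using Suc by simp
    then show ?thesis using add[OF a] by simp
  qed
qed

lemma semigroup_eventually:
  fixes A :: "nat set"
  assumes pos: "\<And>a. a \<in> A \<Longrightarrow> a > 0"
    and add: "\<And>a b. a \<in> A \<Longrightarrow> b \<in> A \<Longrightarrow> a + b \<in> A"
    and g: "Gcd A = 1"
  shows "\<exists>M. \<forall>m\<ge>M. m \<in> A"
proof -
  have ne: "A \<noteq> {}" using g by auto
  define D where "D = {d. d > 0 \<and> (d \<in> A \<or> (\<exists>b\<in>A. b + d \<in> A))}"
  obtain a0 where a0: "a0 \<in> A" using ne by auto
  have "a0 \<in> D" using a0 pos unfolding D_def by auto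
  define d where "d = (LEAST d. d \<in> D)"
  have dD: "d \<in> D" unfolding d_def using \<open>a0 \<in> D\<close> by (rule LeastI)
  have dmin: "\<And>e. e \<in> D \<Longrightarrow> d \<le> e" unfolding d_def by (rule Least_le)
  have dpos: "d > 0" using dD unfolding D_def by auto
  have dvd: "d dvd a" if aA: "a \<in> A" for a
  proof (rule ccontr)
    assume nd: "\<not> d dvd a"
    define q where "q = a div d"
    define r where "r = a mod d"
    have r0: "r > 0" using nd unfolding r_def by (simp add: dvd_eq_mod_eq_0)
    have rd: "r < d" unfolding r_def using dpos by simp
    have aeq: "a = q * d + r" unfolding q_def r_def by simp
    have "r \<in> D"
    proof (cases "q = 0")
      case True
      then have "a = r" using aeq by simp
      then show ?thesis using aA r0 unfolding D_def by auto
    next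
      case False
      then have q1: "q \<ge> 1" by simp
      from dD consider "d \<in> A" | b where "b \<in> A" "b + d \<in> A" unfolding D_def by auto
      then show ?thesis
      proof cases
        case 1
        have "q * d \<in> A" using semigroup_mult[OF add 1 q1] by blast
        then have "q * d + r \<in> A" using aeq aA by simp
        then show ?thesis using \<open>q * d \<in> A\<close> r0 unfolding D_def by auto
      next
        case 2
        have e1: "q * (b + d) \<in> A" using semigroup_mult[OF add 2(2) q1] by blast
        have "q * b \<in> A" using semigroup_mult[OF add 2(1) q1] by blast
        then have "a + q * b \<in> A" using add aA by blast
        moreover have "a + q * b = q * (b + d) + r" using aeq by (simp add: algebra_simps)
        ultimately show ?thesis using e1 r0 unfolding D_def by auto
      qed
    qed
    then show False using dmin rd by fastforce
  qed
  have "d dvd Gcd A" using dvd by (simp add: Gcd_greatest)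
  then have d1: "d = 1" using g by simp
  from dD d1 consider "1 \<in> A" | b where "b \<in> A" "b + 1 \<in> A" unfolding D_def by auto
  then show ?thesis
  proof cases
    case 1
    have "\<forall>m\<ge>1. m \<in> A" using semigroup_mult[OF add 1] by fastforce
    then show ?thesis by blast
  next
    case 2
    have b0: "b > 0" using pos 2 by auto
    have "\<forall>m\<ge>b*b. m \<in> A"
    proof (intro allI impI)
      fix m assume m: "m \<ge> b * b"
      define q where "q = m div b"
      define r where "r = m mod b"
      have rb: "r < b" unfolding r_def using b0 by simp
      have "b * b div b \<le> q" unfolding q_def using m by (rule div_le_mono)
      then have qb: "q \<ge> b" using b0 by simp
      have meq: "m = (q - r) * b + r * (b + 1)"
      proof -
        have "m = q * b + r" unfolding q_def r_def by simp
        moreover have "q * b + r = (q - r) * b + r * (b + 1)" using qb rb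
          by (simp add: algebra_simps diff_mult_distrib)
        ultimately show ?thesis by simp
      qed
      have A1: "(q - r) * b \<in> A" using semigroup_mult[OF add 2(1)] qb rb by simp
      show "m \<in> A"
      proof (cases "r = 0")
        case True then show ?thesis using meq A1 by simp
      next
        case False
        then have "r * (b + 1) \<in> A" using semigroup_mult[OF add 2(2)] by simp
        then show ?thesis using meq A1 add by metis
      qed
    qed
    then show ?thesis by blast
  qed
qed

lemma matpow_nonneg:
  assumes "\<And>i j. i \<in> S \<Longrightarrow> j \<in> S \<Longrightarrow> 0 \<le> A i j" and "j \<in> S"
  shows "0 \<le> matpow S A m i j"
  using assms(2)
proof (induction m arbitrary: j)
  case 0 then show ?case by simp
next
  case (Suc m)
  show ?case using Suc assms(1) by (auto intro!: sum_nonneg mult_nonneg_nonneg)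
qed

lemma matpow_add_ge:
  assumes fin: "finite S" and nn: "\<And>i j. i \<in> S \<Longrightarrow> j \<in> S \<Longrightarrow> 0 \<le> A i j"
    and k: "k \<in> S" and j: "j \<in> S"
  shows "matpow S A m i k * matpow S A n k j \<le> matpow S A (m + n) i j"
  using j
proof (induction n arbitrary: j)
  case 0
  then show ?case using matpow_nonneg[OF nn] by auto
next
  case (Suc n)
  have "matpow S A m i k * matpow S A (Suc n) k j
      = (\<Sum>k'\<in>S. matpow S A m i k * matpow S A n k k' * A k' j)"
    by (simp add: sum_distrib_left mult.assoc)
  also have "\<dots> \<le> (\<Sum>k'\<in>S. matpow S A (m + n) i k' * A k' j)"
    using Suc nn by (intro sum_mono mult_right_mono) auto
  also have "\<dots> = matpow S A (m + Suc n) i j" by simp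
  finally show ?case .
qed

lemma matpow_add_pos:
  assumes fin: "finite S" and nn: "\<And>i j. i \<in> S \<Longrightarrow> j \<in> S \<Longrightarrow> 0 \<le> A i j"
    and k: "k \<in> S" and j: "j \<in> S"
    and "matpow S A m i k > 0" "matpow S A n k j > 0"
  shows "matpow S A (m + n) i j > 0"
  using matpow_add_ge[OF fin nn k j, where m=m and i=i and n=n] assms(5,6)
  by (meson mult_pos_pos order_less_le_trans)

lemma primitive_col:
  fixes T :: "nat \<Rightarrow> nat \<Rightarrow> real"
  assumes K: "K \<ge> 1" and rs: "row_stochastic {1..K} T"
    and irr: "irreducible_mat {1..K} T" and ap: "aperiodic_mat {1..K} T"
  shows "\<exists>l\<ge>1. \<forall>i\<in>{1..K}. matpow {1..K} T l i 1 > 0"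
proof -
  let ?S = "{1..K::nat}"
  have nn: "\<And>i j. i \<in> ?S \<Longrightarrow> j \<in> ?S \<Longrightarrow> 0 \<le> T i j" using rs unfolding row_stochastic_def by blast
  have one: "(1::nat) \<in> ?S" using K by simp
  define A where "A = {m::nat. 0 < m \<and> matpow ?S T m 1 1 > 0}"
  have "Gcd A = 1" using ap one unfolding aperiodic_mat_def A_def by blast
  moreover have "\<And>a b. a \<in> A \<Longrightarrow> b \<in> A \<Longrightarrow> a + b \<in> A"
    unfolding A_def using matpow_add_pos[OF _ nn one one] by auto
  ultimately obtain M where M: "\<forall>m\<ge>M. m \<in> A"
    using semigroup_eventually[of A] unfolding A_def by auto
  define f where "f i = (SOME m. matpow ?S T m i 1 > 0)" for i
  have f: "matpow ?S T (f i) i 1 > 0" if "i \<in> ?S" for i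
    unfolding f_def using irr one that unfolding irreducible_mat_def by (meson someI_ex)
  define Mx where "Mx = Max (f ` ?S)"
  have fle: "f i \<le> Mx" if "i \<in> ?S" for i unfolding Mx_def using that by simp
  define l where "l = Mx + M + 1"
  have "matpow ?S T l i 1 > 0" if i: "i \<in> ?S" for i
  proof -
    have "l - f i \<in> A" using M fle[OF i] unfolding l_def by simp
    then have "matpow ?S T (l - f i) 1 1 > 0" unfolding A_def by simp
    then have "matpow ?S T (f i + (l - f i)) i 1 > 0"
      using matpow_add_pos[OF _ nn one one f[OF i]] by simp
    then show ?thesis using fle[OF i] unfolding l_def by simp
  qed
  then show ?thesis unfolding l_def by (intro exI[of _ "Mx + M + 1"]) auto
qed

lemma sum_PiE_insert:
  fixes F :: "('a \<Rightarrow> 'b) \<Rightarrow> real"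
  assumes "n0 \<notin> I"
  shows "sum F (PiE (insert n0 I) B) = (\<Sum>k\<in>B n0. \<Sum>g\<in>PiE I B. F (g(n0:=k)))"
proof -
  have "sum F (PiE (insert n0 I) B) = sum F ((\<lambda>(y, g). g(n0 := y)) ` (B n0 \<times> PiE I B))"
    by (simp add: PiE_insert_eq)
  also have "\<dots> = sum (F \<circ> (\<lambda>(y, g). g(n0 := y))) (B n0 \<times> PiE I B)"
    by (rule sum.reindex[OF inj_combinator[OF assms]])
  also have "\<dots> = (\<Sum>k\<in>B n0. \<Sum>g\<in>PiE I B. F (g(n0:=k)))"
    by (simp add: sum.cartesian_product split_def)
  finally show ?thesis .
qed

lemma prod_upd:
  fixes a :: "'a \<Rightarrow> 'b \<Rightarrow> real"
  assumes "finite I" "n0 \<notin> I"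
  shows "(\<Prod>n\<in>insert n0 I. a n ((g(n0:=k)) n)) = a n0 k * (\<Prod>n\<in>I. a n (g n))"
proof -
  have "(\<Prod>n\<in>I. a n ((g(n0:=k)) n)) = (\<Prod>n\<in>I. a n (g n))"
    using assms by (intro prod.cong) auto
  then show ?thesis using assms by simp
qed

lemma sum_prod_PiE:
  fixes a :: "'a \<Rightarrow> 'b \<Rightarrow> real"
  assumes "finite I" "finite B"
  shows "(\<Sum>y\<in>PiE I (\<lambda>_. B). \<Prod>n\<in>I. a n (y n)) = (\<Prod>n\<in>I. \<Sum>k\<in>B. a n k)"
  using prod_sum_PiE[of I "\<lambda>_. B" a] assms by simp

lemma prod_diff_L1:
  fixes a b :: "'a \<Rightarrow> 'b \<Rightarrow> real"
  assumes fI: "finite I" and fB: "finite B"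
    and nn: "\<And>n k. n \<in> I \<Longrightarrow> k \<in> B \<Longrightarrow> 0 \<le> a n k \<and> 0 \<le> b n k"
    and sa: "\<And>n. n \<in> I \<Longrightarrow> (\<Sum>k\<in>B. a n k) = 1"
    and sb: "\<And>n. n \<in> I \<Longrightarrow> (\<Sum>k\<in>B. b n k) = 1"
  shows "(\<Sum>y\<in>PiE I (\<lambda>_. B). \<bar>(\<Prod>n\<in>I. a n (y n)) - (\<Prod>n\<in>I. b n (y n))\<bar>)
     \<le> (\<Sum>n\<in>I. \<Sum>k\<in>B. \<bar>a n k - b n k\<bar>)"
  using fI nn sa sb
proof (induction I rule: finite_induct)
  case empty
  then show ?case by simp
next
  case (insert n0 I)
  let ?Y = "PiE I (\<lambda>_. B)"
  let ?A = "\<lambda>g. \<Prod>n\<in>I. a n (g n)"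
  let ?B = "\<lambda>g. \<Prod>n\<in>I. b n (g n)"
  have sA: "sum ?A ?Y = 1" using sum_prod_PiE[OF insert(1) fB, of a] insert.prems by simp
  have Anonneg: "?A g \<ge> 0" if "g \<in> ?Y" for g using that insert.prems by (auto intro!: prod_nonneg)
  have IH: "(\<Sum>g\<in>?Y. \<bar>?A g - ?B g\<bar>) \<le> (\<Sum>n\<in>I. \<Sum>k\<in>B. \<bar>a n k - b n k\<bar>)"
    using insert by auto
  have "(\<Sum>y\<in>PiE (insert n0 I) (\<lambda>_. B). \<bar>(\<Prod>n\<in>insert n0 I. a n (y n)) - (\<Prod>n\<in>insert n0 I. b n (y n))\<bar>)
     = (\<Sum>k\<in>B. \<Sum>g\<in>?Y. \<bar>a n0 k * ?A g - b n0 k * ?B g\<bar>)"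
    by (subst sum_PiE_insert[OF insert(2)]) (simp only: prod_upd[OF insert(1,2)])
  also have "\<dots> \<le> (\<Sum>k\<in>B. \<Sum>g\<in>?Y. \<bar>a n0 k - b n0 k\<bar> * ?A g + b n0 k * \<bar>?A g - ?B g\<bar>)"
  proof (intro sum_mono)
    fix k g assume k: "k \<in> B" and g: "g \<in> ?Y"
    have "a n0 k * ?A g - b n0 k * ?B g = (a n0 k - b n0 k) * ?A g + b n0 k * (?A g - ?B g)"
      by (simp add: algebra_simps)
    also have "\<bar>\<dots>\<bar> \<le> \<bar>(a n0 k - b n0 k) * ?A g\<bar> + \<bar>b n0 k * (?A g - ?B g)\<bar>" by (rule abs_triangle_ineq)
    also have "\<dots> = \<bar>a n0 k - b n0 k\<bar> * ?A g + b n0 k * \<bar>?A g - ?B g\<bar>"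
      using Anonneg[OF g] insert.prems(1)[of n0 k] k by (simp add: abs_mult)
    finally show "\<bar>a n0 k * ?A g - b n0 k * ?B g\<bar> \<le> \<bar>a n0 k - b n0 k\<bar> * ?A g + b n0 k * \<bar>?A g - ?B g\<bar>" .
  qed
  also have "\<dots> = (\<Sum>k\<in>B. \<bar>a n0 k - b n0 k\<bar> * sum ?A ?Y + b n0 k * (\<Sum>g\<in>?Y. \<bar>?A g - ?B g\<bar>))"
    by (simp add: sum.distrib sum_distrib_left)
  also have "\<dots> \<le> (\<Sum>k\<in>B. \<bar>a n0 k - b n0 k\<bar> + b n0 k * (\<Sum>n\<in>I. \<Sum>k\<in>B. \<bar>a n k - b n k\<bar>))"
  proof (intro sum_mono add_mono mult_left_mono)
    fix k assume k: "k \<in> B"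
    show "\<bar>a n0 k - b n0 k\<bar> * sum ?A ?Y \<le> \<bar>a n0 k - b n0 k\<bar>" using sA by simp
    show "(\<Sum>g\<in>?Y. \<bar>?A g - ?B g\<bar>) \<le> (\<Sum>n\<in>I. \<Sum>k\<in>B. \<bar>a n k - b n k\<bar>)" by (rule IH)
    show "0 \<le> b n0 k" using insert.prems(1)[of n0 k] k by simp
  qed
  also have "\<dots> = (\<Sum>k\<in>B. \<bar>a n0 k - b n0 k\<bar>) + (\<Sum>n\<in>I. \<Sum>k\<in>B. \<bar>a n k - b n k\<bar>)"
    using insert.prems(3)[of n0] by (simp add: sum.distrib flip: sum_distrib_right)
  also have "\<dots> = (\<Sum>n\<in>insert n0 I. \<Sum>k\<in>B. \<bar>a n k - b n k\<bar>)" using insert(1,2) by simp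
  finally show ?case .
qed

lemma sum_cart: "(\<Sum>x\<in>A. \<Sum>y\<in>B. F x y) = (\<Sum>p\<in>A \<times> B. F (fst p) (snd p))"
  using sum.cartesian_product[of F B A] by (simp add: split_def)

lemma L2_set_times:
  "L2_set (\<lambda>p. f (fst p) * h (snd p)) (B \<times> Y) = L2_set f B * L2_set h Y"
proof -
  have "(\<Sum>p\<in>B \<times> Y. (f (fst p) * h (snd p))\<^sup>2) = (\<Sum>k\<in>B. (f k)\<^sup>2) * (\<Sum>g\<in>Y. (h g)\<^sup>2)"
  proof -
    have "(\<Sum>p\<in>B \<times> Y. (f (fst p) * h (snd p))\<^sup>2) = (\<Sum>k\<in>B. \<Sum>g\<in>Y. (f k)\<^sup>2 * (h g)\<^sup>2)"
      using sum.cartesian_product[of "\<lambda>k g. (f k)\<^sup>2 * (h g)\<^sup>2" Y B]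
      by (simp add: split_def power_mult_distrib)
    then show ?thesis by (simp add: sum_product)
  qed
  then show ?thesis unfolding L2_set_def by (simp add: real_sqrt_mult)
qed

lemma prod_diff_L2:
  fixes a b :: "'a \<Rightarrow> 'b \<Rightarrow> real"
  assumes fI: "finite I" and fB: "finite B" and C: "C > 0"
    and ca: "\<And>n. n \<in> I \<Longrightarrow> (\<Sum>k\<in>B. (a n k)\<^sup>2) \<le> C"
    and cb: "\<And>n. n \<in> I \<Longrightarrow> (\<Sum>k\<in>B. (b n k)\<^sup>2) \<le> C"
  shows "sqrt (\<Sum>y\<in>PiE I (\<lambda>_. B). ((\<Prod>n\<in>I. a n (y n)) - (\<Prod>n\<in>I. b n (y n)))\<^sup>2)
     \<le> C powr ((real (card I) - 1) / 2) * (\<Sum>n\<in>I. sqrt (\<Sum>k\<in>B. (a n k - b n k)\<^sup>2))"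
  using fI ca cb
proof (induction I rule: finite_induct)
  case empty
  then show ?case by simp
next
  case (insert n0 I)
  let ?Y = "PiE I (\<lambda>_. B)"
  let ?A = "\<lambda>g. \<Prod>n\<in>I. a n (g n)"
  let ?B = "\<lambda>g. \<Prod>n\<in>I. b n (g n)"
  let ?S = "(\<Sum>n\<in>I. sqrt (\<Sum>k\<in>B. (a n k - b n k)\<^sup>2))"
  let ?d = "sqrt (\<Sum>k\<in>B. (a n0 k - b n0 k)\<^sup>2)"
  have IH: "L2_set (\<lambda>g. ?A g - ?B g) ?Y \<le> C powr ((real (card I) - 1) / 2) * ?S"
    using insert unfolding L2_set_def by auto
  have sA: "(\<Sum>g\<in>?Y. (?A g)\<^sup>2) = (\<Prod>n\<in>I. \<Sum>k\<in>B. (a n k)\<^sup>2)"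
    using sum_prod_PiE[OF insert(1) fB, of "\<lambda>n k. (a n k)\<^sup>2"] by (simp add: prod_power_distrib)
  also have "\<dots> \<le> (\<Prod>n\<in>I. C)"
    using insert.prems(1) by (intro prod_mono) (auto intro: sum_nonneg)
  finally have sA': "(\<Sum>g\<in>?Y. (?A g)\<^sup>2) \<le> C ^ card I" by simp
  have L2A: "L2_set ?A ?Y \<le> C powr (real (card I) / 2)"
  proof -
    have "L2_set ?A ?Y \<le> sqrt (C ^ card I)" unfolding L2_set_def using sA' by simp
    also have "\<dots> = C powr (real (card I) / 2)"
      using C by (simp add: powr_half_sqrt[symmetric] powr_realpow[symmetric] powr_powr)
    finally show ?thesis .
  qed
  have L2b: "L2_set (b n0) B \<le> C powr (1/2)"
    using insert.prems(2)[of n0] C unfolding L2_set_def by (simp add: powr_half_sqrt)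
  have "sqrt (\<Sum>y\<in>PiE (insert n0 I) (\<lambda>_. B). ((\<Prod>n\<in>insert n0 I. a n (y n)) - (\<Prod>n\<in>insert n0 I. b n (y n)))\<^sup>2)
     = sqrt (\<Sum>k\<in>B. \<Sum>g\<in>?Y. (a n0 k * ?A g - b n0 k * ?B g)\<^sup>2)"
    by (subst sum_PiE_insert[OF insert(2)]) (simp only: prod_upd[OF insert(1,2)])
  also have "\<dots> = L2_set (\<lambda>p. (a n0 (fst p) - b n0 (fst p)) * ?A (snd p) + b n0 (fst p) * (?A (snd p) - ?B (snd p))) (B \<times> ?Y)"
    unfolding L2_set_def by (simp add: sum_cart algebra_simps)
  also have "\<dots> \<le> L2_set (\<lambda>p. (a n0 (fst p) - b n0 (fst p)) * ?A (snd p)) (B \<times> ?Y)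
       + L2_set (\<lambda>p. b n0 (fst p) * (?A (snd p) - ?B (snd p))) (B \<times> ?Y)"
    by (rule L2_set_triangle_ineq)
  also have "\<dots> = ?d * L2_set ?A ?Y + L2_set (b n0) B * L2_set (\<lambda>g. ?A g - ?B g) ?Y"
  proof -
    have e1: "L2_set (\<lambda>p. (a n0 (fst p) - b n0 (fst p)) * ?A (snd p)) (B \<times> ?Y) = ?d * L2_set ?A ?Y"
      using L2_set_times[of "\<lambda>k. a n0 k - b n0 k" ?A B ?Y] by (simp add: L2_set_def)
    have e2: "L2_set (\<lambda>p. b n0 (fst p) * (?A (snd p) - ?B (snd p))) (B \<times> ?Y)
        = L2_set (b n0) B * L2_set (\<lambda>g. ?A g - ?B g) ?Y"
      using L2_set_times[of "b n0" "\<lambda>g. ?A g - ?B g" B ?Y] by simp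
    show ?thesis using e1 e2 by simp
  qed
  also have "\<dots> \<le> ?d * C powr (real (card I) / 2) + C powr (1/2) * (C powr ((real (card I) - 1) / 2) * ?S)"
    by (intro add_mono mult_mono L2A L2b IH) (auto simp: L2_set_def intro!: sum_nonneg)
  also have "\<dots> = C powr (real (card I) / 2) * (?d + ?S)"
  proof -
    have "C powr (1/2) * C powr ((real (card I) - 1) / 2) = C powr (real (card I) / 2)"
      by (simp add: powr_add[symmetric] add_divide_distrib[symmetric])
    then show ?thesis by (simp add: algebra_simps)
  qed
  also have "\<dots> = C powr ((real (card (insert n0 I)) - 1) / 2) * (\<Sum>n\<in>insert n0 I. sqrt (\<Sum>k\<in>B. (a n k - b n k)\<^sup>2))"
    using insert(1,2) by simp
  finally show ?case .
qed

lemma cyc_sub: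
  assumes "N \<ge> 1" shows "cyc_nbhd N nv n \<subseteq> {1..N}"
proof
  fix m assume "m \<in> cyc_nbhd N nv n"
  then obtain d where m: "m = nat ((int n + d - 1) mod int N) + 1" unfolding cyc_nbhd_def by auto
  have "0 \<le> (int n + d - 1) mod int N" "(int n + d - 1) mod int N < int N" using assms by auto
  then show "m \<in> {1..N}" unfolding m by auto
qed

lemma cyc_fin: "N \<ge> 1 \<Longrightarrow> finite (cyc_nbhd N nv n)"
  by (rule finite_subset[OF cyc_sub]) auto

lemma cyc_self:
  assumes "n \<in> {1..N}" shows "n \<in> cyc_nbhd N nv n"
proof -
  have "(int n + 0 - 1) mod int N = int n - 1" using assms by (auto intro: mod_pos_pos_trivial)
  then have "n = nat ((int n + 0 - 1) mod int N) + 1" using assms by auto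
  then show ?thesis unfolding cyc_nbhd_def by fastforce
qed

lemma cyc_card:
  assumes "n \<in> {1..N}" shows "card (cyc_nbhd N nv n) \<ge> 1"
proof -
  have "N \<ge> 1" using assms by auto
  then show ?thesis using cyc_fin cyc_self[OF assms] by (metis One_nat_def Suc_leI card_gt_0_iff empty_iff)
qed

lemma configs_fin: "finite (configs N K)"
  unfolding configs_def by (simp add: finite_PiE)

lemma configs_mem: "x \<in> configs N K \<Longrightarrow> i \<in> {1..N} \<Longrightarrow> x i \<in> {1..K}"
  unfolding configs_def by (auto simp: PiE_iff)

lemma configs_card: "card (configs N K) = K ^ N"
  unfolding configs_def by (simp add: card_PiE)

lemma configs_ne: "K \<ge> 1 \<Longrightarrow> configs N K \<noteq> {}"
  unfolding configs_def by (simp add: PiE_eq_empty_iff)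

lemma sum_coord:
  fixes f :: "nat \<Rightarrow> real"
  assumes i: "i \<in> {1..N}"
  shows "(\<Sum>x\<in>configs N K. f (x i)) = real K ^ (N - 1) * (\<Sum>j\<in>{1..K}. f j)"
proof -
  define a where "a n k = (if n = i then f k else 1)" for n k
  have "(\<Sum>x\<in>configs N K. f (x i)) = (\<Sum>x\<in>configs N K. \<Prod>n\<in>{1..N}. a n (x n))"
  proof (intro sum.cong refl)
    fix x
    have "(\<Prod>n\<in>{1..N}. a n (x n)) = a i (x i) * (\<Prod>n\<in>{1..N} - {i}. a n (x n))"
      using i by (simp add: prod.remove)
    also have "\<dots> = f (x i)" unfolding a_def by simp
    finally show "f (x i) = (\<Prod>n\<in>{1..N}. a n (x n))" by simp
  qed
  also have "\<dots> = (\<Prod>n\<in>{1..N}. \<Sum>k\<in>{1..K}. a n k)"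
    unfolding configs_def by (rule sum_prod_PiE) auto
  also have "\<dots> = (\<Sum>k\<in>{1..K}. a i k) * (\<Prod>n\<in>{1..N} - {i}. \<Sum>k\<in>{1..K}. a n k)"
    using i by (simp add: prod.remove)
  also have "\<dots> = (\<Sum>j\<in>{1..K}. f j) * real K ^ (N - 1)"
    unfolding a_def using i by simp
  finally show ?thesis by simp
qed

definition avgT :: "nat \<Rightarrow> nat \<Rightarrow> (nat \<Rightarrow> nat \<Rightarrow> real) \<Rightarrow> (nat \<Rightarrow> nat) \<Rightarrow> nat \<Rightarrow> nat \<Rightarrow> real" where
  "avgT N nv T x n k = (1 / real (card (cyc_nbhd N nv n))) * (\<Sum>i\<in>cyc_nbhd N nv n. T (x i) k)"

lemma global_P_avg: "global_P N nv T x y = (\<Prod>n\<in>{1..N}. avgT N nv T x n (y n))"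
  unfolding global_P_def avgT_def by simp

lemma jensen_avg:
  fixes g :: "nat \<Rightarrow> real"
  assumes "finite V" "V \<noteq> {}"
  shows "((1 / real (card V)) * (\<Sum>i\<in>V. g i))\<^sup>2 \<le> (1 / real (card V)) * (\<Sum>i\<in>V. (g i)\<^sup>2)"
proof -
  have c: "real (card V) > 0" using assms by (simp add: card_gt_0_iff)
  have "(\<Sum>i\<in>V. g i)\<^sup>2 \<le> (\<Sum>i\<in>V. (g i)\<^sup>2) * real (card V)" by (rule sum_squared_le_sum_of_squares)
  then show ?thesis using c by (simp add: power_divide field_simps power2_eq_square)
qed

context
  fixes N K nv :: nat and T :: "nat \<Rightarrow> nat \<Rightarrow> real" and x :: "nat \<Rightarrow> nat" and n :: nat
  assumes N: "N \<ge> 1" and rs: "row_stochastic {1..K} T" and x: "x \<in> configs N K" and n: "n \<in> {1..N}"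
begin

lemma V_props: "finite (cyc_nbhd N nv n)" "cyc_nbhd N nv n \<noteq> {}" "real (card (cyc_nbhd N nv n)) > 0"
  "\<And>i. i \<in> cyc_nbhd N nv n \<Longrightarrow> x i \<in> {1..K}"
proof -
  show f: "finite (cyc_nbhd N nv n)" by (rule cyc_fin[OF N])
  show ne: "cyc_nbhd N nv n \<noteq> {}" using cyc_self[OF n] by auto
  show "real (card (cyc_nbhd N nv n)) > 0" using f ne by (simp add: card_gt_0_iff)
  show "\<And>i. i \<in> cyc_nbhd N nv n \<Longrightarrow> x i \<in> {1..K}"
    using configs_mem[OF x] cyc_sub[OF N] by (meson subsetD)
qed

lemma avgT_nonneg: "k \<in> {1..K} \<Longrightarrow> 0 \<le> avgT N nv T x n k"
proof -
  assume k: "k \<in> {1..K}"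
  have "0 \<le> (\<Sum>i\<in>cyc_nbhd N nv n. T (x i) k)"
    using rs V_props(4) k unfolding row_stochastic_def by (intro sum_nonneg) blast
  then show ?thesis unfolding avgT_def by simp
qed

lemma avgT_sum: "(\<Sum>k\<in>{1..K}. avgT N nv T x n k) = 1"
proof -
  have "(\<Sum>k\<in>{1..K}. avgT N nv T x n k) = (1 / real (card (cyc_nbhd N nv n))) * (\<Sum>i\<in>cyc_nbhd N nv n. \<Sum>k\<in>{1..K}. T (x i) k)"
    unfolding avgT_def by (simp only: sum_distrib_left) (rule sum.swap)
  also have "\<dots> = (1 / real (card (cyc_nbhd N nv n))) * (\<Sum>i\<in>cyc_nbhd N nv n. 1)"
    using rs V_props(4) unfolding row_stochastic_def by simp
  also have "\<dots> = 1" using V_props by simp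
  finally show ?thesis .
qed

lemma avgT_sq:
  assumes "\<And>j. j \<in> {1..K} \<Longrightarrow> (\<Sum>k\<in>{1..K}. (T j k)\<^sup>2) \<le> C"
  shows "(\<Sum>k\<in>{1..K}. (avgT N nv T x n k)\<^sup>2) \<le> C"
proof -
  let ?V = "cyc_nbhd N nv n"
  have "(\<Sum>k\<in>{1..K}. (avgT N nv T x n k)\<^sup>2) \<le> (\<Sum>k\<in>{1..K}. (1 / real (card ?V)) * (\<Sum>i\<in>?V. (T (x i) k)\<^sup>2))"
    unfolding avgT_def using V_props by (intro sum_mono jensen_avg) auto
  also have "\<dots> = (1 / real (card ?V)) * (\<Sum>i\<in>?V. \<Sum>k\<in>{1..K}. (T (x i) k)\<^sup>2)"
    by (simp only: sum_distrib_left) (rule sum.swap)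
  also have "\<dots> \<le> (1 / real (card ?V)) * (\<Sum>i\<in>?V. C)"
    using assms V_props by (intro mult_left_mono sum_mono) auto
  also have "\<dots> = C" using V_props by simp
  finally show ?thesis .
qed

end

lemma global_P_nonneg:
  assumes N: "N \<ge> 1" and rs: "row_stochastic {1..K} T" and x: "x \<in> configs N K" and y: "y \<in> configs N K"
  shows "0 \<le> global_P N nv T x y"
  unfolding global_P_avg using avgT_nonneg[OF N rs x] configs_mem[OF y] by (auto intro!: prod_nonneg)

lemma global_P_rowsum:
  assumes N: "N \<ge> 1" and rs: "row_stochastic {1..K} T" and x: "x \<in> configs N K"
  shows "(\<Sum>y\<in>configs N K. global_P N nv T x y) = 1"
  unfolding global_P_avg configs_def
  using sum_prod_PiE[of "{1..N}" "{1..K}" "avgT N nv T x"] avgT_sum[OF N rs x] by simp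

lemma L1_row:
  assumes N: "N \<ge> 1" and r1: "row_stochastic {1..K} T1" and r2: "row_stochastic {1..K} T2"
    and x: "x \<in> configs N K"
  shows "(\<Sum>y\<in>configs N K. \<bar>global_P N nv T1 x y - global_P N nv T2 x y\<bar>)
    \<le> (\<Sum>n\<in>{1..N}. (1 / real (card (cyc_nbhd N nv n))) *
          (\<Sum>i\<in>cyc_nbhd N nv n. \<Sum>k\<in>{1..K}. \<bar>T1 (x i) k - T2 (x i) k\<bar>))"
proof -
  have "(\<Sum>y\<in>configs N K. \<bar>global_P N nv T1 x y - global_P N nv T2 x y\<bar>)
     \<le> (\<Sum>n\<in>{1..N}. \<Sum>k\<in>{1..K}. \<bar>avgT N nv T1 x n k - avgT N nv T2 x n k\<bar>)"
    unfolding global_P_avg configs_def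
    using avgT_nonneg[OF N r1 x] avgT_nonneg[OF N r2 x] avgT_sum[OF N r1 x] avgT_sum[OF N r2 x]
    by (intro prod_diff_L1) auto
  also have "\<dots> \<le> (\<Sum>n\<in>{1..N}. (1 / real (card (cyc_nbhd N nv n))) *
          (\<Sum>i\<in>cyc_nbhd N nv n. \<Sum>k\<in>{1..K}. \<bar>T1 (x i) k - T2 (x i) k\<bar>))"
  proof (intro sum_mono)
    fix n assume n: "n \<in> {1..N}"
    let ?V = "cyc_nbhd N nv n" and ?c = "1 / real (card (cyc_nbhd N nv n))"
    have c: "?c \<ge> 0" by simp
    have "(\<Sum>k\<in>{1..K}. \<bar>avgT N nv T1 x n k - avgT N nv T2 x n k\<bar>)
        = (\<Sum>k\<in>{1..K}. ?c * \<bar>\<Sum>i\<in>?V. T1 (x i) k - T2 (x i) k\<bar>)"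
      unfolding avgT_def by (simp add: sum_subtractf diff_divide_distrib[symmetric] abs_divide)
    also have "\<dots> \<le> (\<Sum>k\<in>{1..K}. ?c * (\<Sum>i\<in>?V. \<bar>T1 (x i) k - T2 (x i) k\<bar>))"
      by (intro sum_mono mult_left_mono c sum_abs)
    also have "\<dots> = ?c * (\<Sum>i\<in>?V. \<Sum>k\<in>{1..K}. \<bar>T1 (x i) k - T2 (x i) k\<bar>)"
      by (simp only: sum_distrib_left) (rule sum.swap)
    finally show "(\<Sum>k\<in>{1..K}. \<bar>avgT N nv T1 x n k - avgT N nv T2 x n k\<bar>) \<le> \<dots>" .
  qed
  finally show ?thesis .
qed

lemma norm11_ge:
  fixes D :: "nat \<Rightarrow> nat \<Rightarrow> real"
  assumes j: "j \<in> {1..K}"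
  shows "(\<Sum>k\<in>{1..K}. \<bar>D j k\<bar>) \<le> norm11 {1..K} D"
proof -
  let ?F = "\<lambda>phi. (\<Sum>k\<in>{1..K}. \<bar>\<Sum>i\<in>{1..K}. phi i * D i k\<bar>)"
  have bdd: "bdd_above {?F phi | phi. (\<Sum>i\<in>{1..K}. \<bar>phi i\<bar>) \<le> 1}"
  proof (rule bdd_aboveI)
    fix z assume "z \<in> {?F phi | phi. (\<Sum>i\<in>{1..K}. \<bar>phi i\<bar>) \<le> 1}"
    then obtain phi where z: "z = ?F phi" and p: "(\<Sum>i\<in>{1..K}. \<bar>phi i\<bar>) \<le> 1" by auto
    have pi: "\<bar>phi i\<bar> \<le> 1" if "i \<in> {1..K}" for i
      using p member_le_sum[of i "{1..K}" "\<lambda>i. \<bar>phi i\<bar>"] that by simp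
    have "z \<le> (\<Sum>k\<in>{1..K}. \<Sum>i\<in>{1..K}. \<bar>phi i * D i k\<bar>)"
      unfolding z by (intro sum_mono sum_abs)
    also have "\<dots> \<le> (\<Sum>k\<in>{1..K}. \<Sum>i\<in>{1..K}. \<bar>D i k\<bar>)"
      using pi by (intro sum_mono) (auto simp: abs_mult intro: mult_left_le_one_le)
    finally show "z \<le> (\<Sum>k\<in>{1..K}. \<Sum>i\<in>{1..K}. \<bar>D i k\<bar>)" .
  qed
  define phi where "phi i = (if i = j then 1 else (0::real))" for i
  have "(\<Sum>i\<in>{1..K}. \<bar>phi i\<bar>) = 1" unfolding phi_def using j by (simp add: sum.delta)
  moreover have "?F phi = (\<Sum>k\<in>{1..K}. \<bar>D j k\<bar>)"
  proof -
    have e: "phi i * D i k = (if j = i then D j k else 0)" for i k by (simp add: phi_def)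
    show ?thesis unfolding e using j by (simp add: sum.delta)
  qed
  ultimately have "(\<Sum>k\<in>{1..K}. \<bar>D j k\<bar>) \<in> {?F phi | phi. (\<Sum>i\<in>{1..K}. \<bar>phi i\<bar>) \<le> 1}"
    by (metis (mono_tags, lifting) mem_Collect_eq order_refl)
  then show ?thesis unfolding norm11_def by (rule cSup_upper[OF _ bdd])
qed

lemma claim1:
  assumes N: "N \<ge> 1" and r1: "row_stochastic {1..K} T1" and r2: "row_stochastic {1..K} T2"
  shows "ent_norm1 (configs N K) (\<lambda>x y. global_P N nv T1 x y - global_P N nv T2 x y)
      \<le> real N * real K ^ (N - 1) * ent_norm1 {1..K} (\<lambda>i j. T1 i j - T2 i j)"
    and "ent_norm1 (configs N K) (\<lambda>x y. global_P N nv T1 x y - global_P N nv T2 x y)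
      \<le> real N * real K ^ (N - 1) * (real K * norm11 {1..K} (\<lambda>i j. T1 i j - T2 i j))"
proof -
  let ?S = "configs N K"
  define r where "r j = (\<Sum>k\<in>{1..K}. \<bar>T1 j k - T2 j k\<bar>)" for j
  define c where "c n = 1 / real (card (cyc_nbhd N nv n))" for n
  have cV: "c n * real (card (cyc_nbhd N nv n)) = 1" if "n \<in> {1..N}" for n
  proof -
    have "card (cyc_nbhd N nv n) \<ge> 1" by (rule cyc_card[OF that])
    then show ?thesis unfolding c_def by simp
  qed
  have Vsub: "i \<in> {1..N}" if "i \<in> cyc_nbhd N nv n" for i n using cyc_sub[OF N] that by blast
  have base: "ent_norm1 ?S (\<lambda>x y. global_P N nv T1 x y - global_P N nv T2 x y)
      \<le> (\<Sum>x\<in>?S. \<Sum>n\<in>{1..N}. c n * (\<Sum>i\<in>cyc_nbhd N nv n. r (x i)))"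
    unfolding ent_norm1_def r_def c_def by (intro sum_mono L1_row[OF N r1 r2])
  have "(\<Sum>x\<in>?S. \<Sum>n\<in>{1..N}. c n * (\<Sum>i\<in>cyc_nbhd N nv n. r (x i)))
      = (\<Sum>n\<in>{1..N}. c n * (\<Sum>i\<in>cyc_nbhd N nv n. \<Sum>x\<in>?S. r (x i)))"
    by (subst sum.swap) (simp add: sum_distrib_left[symmetric] sum.swap[of _ ?S])
  also have "\<dots> = (\<Sum>n\<in>{1..N}. c n * (\<Sum>i\<in>cyc_nbhd N nv n. real K ^ (N - 1) * (\<Sum>j\<in>{1..K}. r j)))"
    using sum_coord Vsub by (intro sum.cong refl arg_cong2[where f="(*)"]) auto
  also have "\<dots> = (\<Sum>n\<in>{1..N}. real K ^ (N - 1) * (\<Sum>j\<in>{1..K}. r j))"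
  proof (intro sum.cong refl)
    fix n assume n: "n \<in> {1..N}"
    show "c n * (\<Sum>i\<in>cyc_nbhd N nv n. real K ^ (N - 1) * (\<Sum>j\<in>{1..K}. r j)) = real K ^ (N - 1) * (\<Sum>j\<in>{1..K}. r j)"
      using cV[OF n] by (simp add: mult.assoc[symmetric])
  qed
  also have "\<dots> = real N * real K ^ (N - 1) * ent_norm1 {1..K} (\<lambda>i j. T1 i j - T2 i j)"
    unfolding ent_norm1_def r_def by simp
  finally show "ent_norm1 ?S (\<lambda>x y. global_P N nv T1 x y - global_P N nv T2 x y)
      \<le> real N * real K ^ (N - 1) * ent_norm1 {1..K} (\<lambda>i j. T1 i j - T2 i j)" using base by simp
  let ?M = "norm11 {1..K} (\<lambda>i j. T1 i j - T2 i j)"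
  have rM: "r j \<le> ?M" if "j \<in> {1..K}" for j unfolding r_def using norm11_ge[OF that] by simp
  have "(\<Sum>x\<in>?S. \<Sum>n\<in>{1..N}. c n * (\<Sum>i\<in>cyc_nbhd N nv n. r (x i)))
      \<le> (\<Sum>x\<in>?S. \<Sum>n\<in>{1..N}. c n * (\<Sum>i\<in>cyc_nbhd N nv n. ?M))"
    using rM configs_mem Vsub unfolding c_def by (intro sum_mono mult_left_mono) auto
  also have "\<dots> = (\<Sum>x\<in>?S. \<Sum>n\<in>{1..N}. ?M)"
  proof (intro sum.cong refl)
    fix n assume n: "n \<in> {1..N}"
    show "c n * (\<Sum>i\<in>cyc_nbhd N nv n. ?M) = ?M" using cV[OF n] by (simp add: mult.assoc[symmetric])
  qed
  also have "\<dots> = real N * real K ^ (N - 1) * (real K * ?M)"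
    using configs_card[of N K] N by (simp add: power_eq_if[of "real K" N])
  finally show "ent_norm1 ?S (\<lambda>x y. global_P N nv T1 x y - global_P N nv T2 x y)
      \<le> real N * real K ^ (N - 1) * (real K * ?M)" using base by simp
qed

lemma avg_total:
  fixes f :: "nat \<Rightarrow> real"
  assumes N: "N \<ge> 1"
  shows "(\<Sum>x\<in>configs N K. \<Sum>n\<in>{1..N}. (1 / real (card (cyc_nbhd N nv n))) * (\<Sum>i\<in>cyc_nbhd N nv n. f (x i)))
     = real N * real K ^ (N - 1) * (\<Sum>j\<in>{1..K}. f j)"
proof -
  let ?S = "configs N K"
  define c where "c n = 1 / real (card (cyc_nbhd N nv n))" for n
  have cV: "c n * real (card (cyc_nbhd N nv n)) = 1" if "n \<in> {1..N}" for n
  proof -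
    have "card (cyc_nbhd N nv n) \<ge> 1" by (rule cyc_card[OF that])
    then show ?thesis unfolding c_def by simp
  qed
  have Vsub: "i \<in> {1..N}" if "i \<in> cyc_nbhd N nv n" for i n using cyc_sub[OF N] that by blast
  have "(\<Sum>x\<in>?S. \<Sum>n\<in>{1..N}. c n * (\<Sum>i\<in>cyc_nbhd N nv n. f (x i)))
      = (\<Sum>n\<in>{1..N}. c n * (\<Sum>i\<in>cyc_nbhd N nv n. \<Sum>x\<in>?S. f (x i)))"
    by (subst sum.swap) (simp add: sum_distrib_left[symmetric] sum.swap[of _ ?S])
  also have "\<dots> = (\<Sum>n\<in>{1..N}. c n * (\<Sum>i\<in>cyc_nbhd N nv n. real K ^ (N - 1) * (\<Sum>j\<in>{1..K}. f j)))"
    using sum_coord Vsub by (intro sum.cong refl arg_cong2[where f="(*)"]) auto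
  also have "\<dots> = (\<Sum>n\<in>{1..N}. real K ^ (N - 1) * (\<Sum>j\<in>{1..K}. f j))"
  proof (intro sum.cong refl)
    fix n assume n: "n \<in> {1..N}"
    show "c n * (\<Sum>i\<in>cyc_nbhd N nv n. real K ^ (N - 1) * (\<Sum>j\<in>{1..K}. f j)) = real K ^ (N - 1) * (\<Sum>j\<in>{1..K}. f j)"
      using cV[OF n] by (simp add: mult.assoc[symmetric])
  qed
  also have "\<dots> = real N * real K ^ (N - 1) * (\<Sum>j\<in>{1..K}. f j)" by simp
  finally show ?thesis unfolding c_def .
qed

lemma powr_sq:
  assumes "C > 0" "N \<ge> 1"
  shows "(C powr ((real N - 1) / 2))\<^sup>2 = C ^ (N - 1)"
proof -
  have "(C powr ((real N - 1) / 2))\<^sup>2 = C powr (real N - 1)"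
    using assms by (simp add: power2_eq_square powr_add[symmetric])
  also have "C powr (real N - 1) = C ^ (N - 1)"
    using powr_realpow[OF assms(1), of "N - 1"] assms by (simp add: of_nat_diff)
  finally show ?thesis .
qed

lemma claim3:
  assumes N: "N \<ge> 1" and r1: "row_stochastic {1..K} T1" and r2: "row_stochastic {1..K} T2"
    and C1: "\<And>j. j \<in> {1..K} \<Longrightarrow> (\<Sum>k\<in>{1..K}. (T1 j k)\<^sup>2) \<le> C"
    and C2: "\<And>j. j \<in> {1..K} \<Longrightarrow> (\<Sum>k\<in>{1..K}. (T2 j k)\<^sup>2) \<le> C"
    and KC: "real K * C \<ge> 1"
  shows "ent_norm2 (configs N K) (\<lambda>x y. global_P N nv T1 x y - global_P N nv T2 x y)
     \<le> real N * (real K * C) powr (real N / 2) * ent_norm2 {1..K} (\<lambda>i j. T1 i j - T2 i j)"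
proof -
  let ?S = "configs N K"
  have Cpos: "C > 0" using KC by (metis less_numeral_extra(1) mult_nonneg_nonpos not_less of_nat_0_le_iff order_less_le_trans)
  define q where "q j = (\<Sum>k\<in>{1..K}. (T1 j k - T2 j k)\<^sup>2)" for j
  define c where "c n = 1 / real (card (cyc_nbhd N nv n))" for n
  have row: "(\<Sum>y\<in>?S. (global_P N nv T1 x y - global_P N nv T2 x y)\<^sup>2)
      \<le> C ^ (N - 1) * (real N * (\<Sum>n\<in>{1..N}. c n * (\<Sum>i\<in>cyc_nbhd N nv n. q (x i))))"
    if x: "x \<in> ?S" for x
  proof -
    define \<delta> where "\<delta> n = (\<Sum>k\<in>{1..K}. (avgT N nv T1 x n k - avgT N nv T2 x n k)\<^sup>2)" for n
    have a: "sqrt (\<Sum>y\<in>?S. (global_P N nv T1 x y - global_P N nv T2 x y)\<^sup>2)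
        \<le> C powr ((real N - 1) / 2) * (\<Sum>n\<in>{1..N}. sqrt (\<delta> n))"
      unfolding global_P_avg configs_def \<delta>_def
      using prod_diff_L2[of "{1..N}" "{1..K}" C "avgT N nv T1 x" "avgT N nv T2 x"]
        avgT_sq[OF N r1 x _ C1] avgT_sq[OF N r2 x _ C2] Cpos by simp
    have s0: "0 \<le> (\<Sum>y\<in>?S. (global_P N nv T1 x y - global_P N nv T2 x y)\<^sup>2)" by (intro sum_nonneg) simp
    have "(\<Sum>y\<in>?S. (global_P N nv T1 x y - global_P N nv T2 x y)\<^sup>2)
        = (sqrt (\<Sum>y\<in>?S. (global_P N nv T1 x y - global_P N nv T2 x y)\<^sup>2))\<^sup>2" using s0 by simp
    also have "\<dots> \<le> (C powr ((real N - 1) / 2) * (\<Sum>n\<in>{1..N}. sqrt (\<delta> n)))\<^sup>2"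
      using a s0 by (intro power_mono) auto
    also have "\<dots> = C ^ (N - 1) * (\<Sum>n\<in>{1..N}. sqrt (\<delta> n))\<^sup>2"
      using powr_sq[OF Cpos N] by (simp add: power_mult_distrib)
    also have "\<dots> \<le> C ^ (N - 1) * ((\<Sum>n\<in>{1..N}. (sqrt (\<delta> n))\<^sup>2) * real N)"
      using sum_squared_le_sum_of_squares[of "\<lambda>n. sqrt (\<delta> n)" "{1..N}"] Cpos
      by (intro mult_left_mono) auto
    also have "\<dots> = C ^ (N - 1) * (real N * (\<Sum>n\<in>{1..N}. \<delta> n))"
      unfolding \<delta>_def by (simp add: sum_nonneg)
    also have "\<dots> \<le> C ^ (N - 1) * (real N * (\<Sum>n\<in>{1..N}. c n * (\<Sum>i\<in>cyc_nbhd N nv n. q (x i))))"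
    proof (intro mult_left_mono sum_mono)
      fix n assume n: "n \<in> {1..N}"
      let ?V = "cyc_nbhd N nv n"
      have "\<delta> n = (\<Sum>k\<in>{1..K}. (c n * (\<Sum>i\<in>?V. T1 (x i) k - T2 (x i) k))\<^sup>2)"
        unfolding \<delta>_def avgT_def c_def by (simp add: sum_subtractf right_diff_distrib)
      also have "\<dots> \<le> (\<Sum>k\<in>{1..K}. c n * (\<Sum>i\<in>?V. (T1 (x i) k - T2 (x i) k)\<^sup>2))"
        unfolding c_def using V_props[OF N r1 x n] by (intro sum_mono jensen_avg) auto
      also have "\<dots> = c n * (\<Sum>i\<in>?V. q (x i))"
        unfolding q_def by (simp only: sum_distrib_left) (rule sum.swap)
      finally show "\<delta> n \<le> c n * (\<Sum>i\<in>?V. q (x i))" .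
    qed (use Cpos in auto)
    finally show ?thesis .
  qed
  have "(\<Sum>x\<in>?S. \<Sum>y\<in>?S. (global_P N nv T1 x y - global_P N nv T2 x y)\<^sup>2)
      \<le> (\<Sum>x\<in>?S. C ^ (N - 1) * (real N * (\<Sum>n\<in>{1..N}. c n * (\<Sum>i\<in>cyc_nbhd N nv n. q (x i)))))"
    by (intro sum_mono row)
  also have "\<dots> = C ^ (N - 1) * real N * (real N * real K ^ (N - 1) * (\<Sum>j\<in>{1..K}. q j))"
    using avg_total[OF N, where K=K and nv=nv and f=q] unfolding c_def by (simp add: sum_distrib_left[symmetric] mult.assoc)
  also have "\<dots> = (real N)\<^sup>2 * (real K * C) ^ (N - 1) * (\<Sum>j\<in>{1..K}. q j)"
    by (simp add: power_mult_distrib power2_eq_square)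
  finally have tot: "(\<Sum>x\<in>?S. \<Sum>y\<in>?S. (global_P N nv T1 x y - global_P N nv T2 x y)\<^sup>2)
      \<le> (real N)\<^sup>2 * (real K * C) ^ (N - 1) * (\<Sum>j\<in>{1..K}. q j)" .
  have KC0: "real K * C > 0" using KC by simp
  have "ent_norm2 ?S (\<lambda>x y. global_P N nv T1 x y - global_P N nv T2 x y)
      \<le> sqrt ((real N)\<^sup>2 * (real K * C) ^ (N - 1) * (\<Sum>j\<in>{1..K}. q j))"
    unfolding ent_norm2_def using tot by simp
  also have "\<dots> = real N * sqrt ((real K * C) ^ (N - 1)) * sqrt (\<Sum>j\<in>{1..K}. q j)"
    by (simp add: real_sqrt_mult)
  also have "sqrt ((real K * C) ^ (N - 1)) = (real K * C) powr ((real N - 1) / 2)"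
    using powr_sq[OF KC0 N] KC0 by (metis powr_ge_zero real_sqrt_abs abs_of_nonneg real_sqrt_pow2_iff
        real_sqrt_unique)
  also have "real N * (real K * C) powr ((real N - 1) / 2) * sqrt (\<Sum>j\<in>{1..K}. q j)
      \<le> real N * (real K * C) powr (real N / 2) * sqrt (\<Sum>j\<in>{1..K}. q j)"
  proof -
    have "(real K * C) powr ((real N - 1) / 2) \<le> (real K * C) powr (real N / 2)"
      using KC by (intro powr_mono) auto
    moreover have "0 \<le> sum q {1..K}" unfolding q_def by (intro sum_nonneg) auto
    ultimately show ?thesis by (intro mult_right_mono mult_left_mono) auto
  qed
  finally show ?thesis unfolding ent_norm2_def q_def .
qed

lemma rowsq_le1:
  assumes rs: "row_stochastic {1..K} T" and j: "j \<in> {1..K}"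
  shows "(\<Sum>k\<in>{1..K}. (T j k)\<^sup>2) \<le> 1"
proof -
  have "(\<Sum>k\<in>{1..K}. (T j k)\<^sup>2) \<le> (\<Sum>k\<in>{1..K}. T j k)"
  proof (intro sum_mono)
    fix k assume k: "k \<in> {1..K}"
    have "0 \<le> T j k" "T j k \<le> 1" using rs j k unfolding row_stochastic_def by auto
    then show "(T j k)\<^sup>2 \<le> T j k" by (simp add: power2_eq_square mult_left_le_one_le)
  qed
  also have "\<dots> = 1" using rs j unfolding row_stochastic_def by auto
  finally show ?thesis .
qed

lemma rowsq_ge:
  assumes rs: "row_stochastic {1..K} T" and j: "j \<in> {1..K}"
  shows "real K * (\<Sum>k\<in>{1..K}. (T j k)\<^sup>2) \<ge> 1"
proof -
  have "(\<Sum>k\<in>{1..K}. T j k)\<^sup>2 \<le> (\<Sum>k\<in>{1..K}. (T j k)\<^sup>2) * real (card {1..K})"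
    by (rule sum_squared_le_sum_of_squares)
  moreover have "(\<Sum>k\<in>{1..K}. T j k) = 1" using rs j unfolding row_stochastic_def by auto
  ultimately show ?thesis by (simp add: mult.commute)
qed

lemma matpow_rowsum:
  assumes fin: "finite S" and nn: "\<And>i j. i \<in> S \<Longrightarrow> j \<in> S \<Longrightarrow> 0 \<le> A i j"
    and rs: "\<And>i. i \<in> S \<Longrightarrow> (\<Sum>j\<in>S. A i j) = 1" and x: "x \<in> S"
  shows "(\<Sum>y\<in>S. matpow S A m x y) = 1"
proof (induction m)
  case 0 then show ?case using fin x by simp
next
  case (Suc m)
  have "(\<Sum>y\<in>S. matpow S A (Suc m) x y) = (\<Sum>k\<in>S. matpow S A m x k * (\<Sum>y\<in>S. A k y))"
    by (simp add: sum_distrib_left) (rule sum.swap)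
  also have "\<dots> = (\<Sum>k\<in>S. matpow S A m x k)" using rs by simp
  finally show ?case using Suc by simp
qed

lemma stat_pow:
  assumes fin: "finite S" and st: "stationary S A p" and y: "y \<in> S"
  shows "(\<Sum>x\<in>S. p x * matpow S A m x y) = p y"
  using y
proof (induction m arbitrary: y)
  case 0 then show ?case using fin by (simp add: if_distrib cong: if_cong)
next
  case (Suc m)
  have "(\<Sum>x\<in>S. p x * matpow S A (Suc m) x y) = (\<Sum>k\<in>S. (\<Sum>x\<in>S. p x * matpow S A m x k) * A k y)"
    by (simp add: sum_distrib_left sum_distrib_right mult.assoc) (rule sum.swap)
  also have "\<dots> = (\<Sum>k\<in>S. p k * A k y)" using Suc by simp
  also have "\<dots> = p y" using st Suc.prems unfolding stationary_def by auto
  finally show ?case .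
qed

lemma pert_pow:
  assumes fin: "finite S" and nn: "\<And>i j. i \<in> S \<Longrightarrow> j \<in> S \<Longrightarrow> 0 \<le> A i j"
    and rs: "\<And>i. i \<in> S \<Longrightarrow> (\<Sum>j\<in>S. A i j) = 1" and st: "stationary S B p"
  shows "vec_norm1 S (\<lambda>y. (\<Sum>x\<in>S. p x * matpow S A m x y) - p y) \<le> real m * ent_norm1 S (\<lambda>x y. A x y - B x y)"
proof (induction m)
  case 0
  have "(\<Sum>x\<in>S. p x * matpow S A 0 x y) = p y" if "y \<in> S" for y
    using fin that by (simp add: if_distrib cong: if_cong)
  then show ?case unfolding vec_norm1_def by simp
next
  case (Suc m)
  define w where "w y = (\<Sum>x\<in>S. p x * matpow S A m x y)" for y
  have pnn: "0 \<le> p x" "p x \<le> 1" if "x \<in> S" for x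
  proof -
    show "0 \<le> p x" using st that unfolding stationary_def by auto
    have "p x \<le> (\<Sum>x\<in>S. p x)" using st that fin by (intro member_le_sum) (auto simp: stationary_def)
    then show "p x \<le> 1" using st unfolding stationary_def by simp
  qed
  have eq: "(\<Sum>x\<in>S. p x * matpow S A (Suc m) x y) - p y
      = (\<Sum>k\<in>S. (w k - p k) * A k y) + (\<Sum>k\<in>S. p k * (A k y - B k y))" if y: "y \<in> S" for y
  proof -
    have "(\<Sum>x\<in>S. p x * matpow S A (Suc m) x y) = (\<Sum>k\<in>S. w k * A k y)"
      unfolding w_def by (simp add: sum_distrib_left sum_distrib_right mult.assoc) (rule sum.swap)
    moreover have "p y = (\<Sum>k\<in>S. p k * B k y)" using st y unfolding stationary_def by auto
    ultimately show ?thesis by (simp add: algebra_simps sum_subtractf sum.distrib)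
  qed
  have "vec_norm1 S (\<lambda>y. (\<Sum>x\<in>S. p x * matpow S A (Suc m) x y) - p y)
      \<le> (\<Sum>y\<in>S. (\<Sum>k\<in>S. \<bar>w k - p k\<bar> * A k y) + (\<Sum>k\<in>S. \<bar>A k y - B k y\<bar>))"
    unfolding vec_norm1_def
  proof (intro sum_mono)
    fix y assume y: "y \<in> S"
    have "\<bar>(\<Sum>k\<in>S. (w k - p k) * A k y) + (\<Sum>k\<in>S. p k * (A k y - B k y))\<bar>
       \<le> \<bar>\<Sum>k\<in>S. (w k - p k) * A k y\<bar> + \<bar>\<Sum>k\<in>S. p k * (A k y - B k y)\<bar>" by (rule abs_triangle_ineq)
    also have "\<dots> \<le> (\<Sum>k\<in>S. \<bar>w k - p k\<bar> * A k y) + (\<Sum>k\<in>S. \<bar>A k y - B k y\<bar>)"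
    proof (intro add_mono)
      show "\<bar>\<Sum>k\<in>S. (w k - p k) * A k y\<bar> \<le> (\<Sum>k\<in>S. \<bar>w k - p k\<bar> * A k y)"
        using nn y by (auto intro!: order_trans[OF sum_abs] sum_mono simp: abs_mult)
      show "\<bar>\<Sum>k\<in>S. p k * (A k y - B k y)\<bar> \<le> (\<Sum>k\<in>S. \<bar>A k y - B k y\<bar>)"
      proof (rule order_trans[OF sum_abs], intro sum_mono)
        fix k assume k: "k \<in> S"
        show "\<bar>p k * (A k y - B k y)\<bar> \<le> \<bar>A k y - B k y\<bar>"
          using pnn[OF k] by (simp add: abs_mult mult_left_le_one_le)
      qed
    qed
    finally show "\<bar>(\<Sum>x\<in>S. p x * matpow S A (Suc m) x y) - p y\<bar> \<le> \<dots>" using eq[OF y] by simp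
  qed
  also have "\<dots> = (\<Sum>k\<in>S. \<bar>w k - p k\<bar> * (\<Sum>y\<in>S. A k y)) + (\<Sum>k\<in>S. \<Sum>y\<in>S. \<bar>A k y - B k y\<bar>)"
    by (simp add: sum.distrib sum_distrib_left) (intro arg_cong2[where f="(+)"] sum.swap)
  also have "\<dots> = vec_norm1 S (\<lambda>y. w y - p y) + ent_norm1 S (\<lambda>x y. A x y - B x y)"
    unfolding vec_norm1_def ent_norm1_def using rs by simp
  also have "\<dots> \<le> real m * ent_norm1 S (\<lambda>x y. A x y - B x y) + ent_norm1 S (\<lambda>x y. A x y - B x y)"
    using Suc unfolding w_def by simp
  finally show ?case by (simp add: algebra_simps)
qed

lemma tau_bound:
  assumes fin: "finite S" and x: "x \<in> S" and x': "x' \<in> S"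
  shows "(\<Sum>j\<in>S. \<bar>A x j - A x' j\<bar>) \<le> 2 * dob_tau S A"
proof -
  have f: "finite {(\<Sum>j\<in>S. \<bar>A x j - A x' j\<bar>) | x x'. x \<in> S \<and> x' \<in> S}"
    using fin by (intro finite_image_set2) auto
  have "(\<Sum>j\<in>S. \<bar>A x j - A x' j\<bar>) \<le> Max {(\<Sum>j\<in>S. \<bar>A x j - A x' j\<bar>) | x x'. x \<in> S \<and> x' \<in> S}"
    using x x' by (intro Max_ge[OF f]) auto
  then show ?thesis unfolding dob_tau_def by simp
qed

lemma tau_lt1:
  assumes fin: "finite S" and nn: "\<And>i j. i \<in> S \<Longrightarrow> j \<in> S \<Longrightarrow> 0 \<le> A i j"
    and rs: "\<And>i. i \<in> S \<Longrightarrow> (\<Sum>j\<in>S. A i j) = 1" and y0: "y0 \<in> S"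
    and pos: "\<And>x. x \<in> S \<Longrightarrow> A x y0 > 0"
  shows "dob_tau S A < 1"
proof -
  let ?Z = "{(\<Sum>j\<in>S. \<bar>A x j - A x' j\<bar>) | x x'. x \<in> S \<and> x' \<in> S}"
  have f: "finite ?Z" using fin by (intro finite_image_set2) auto
  have ne: "?Z \<noteq> {}" using y0 by auto
  have lt: "z < 2" if "z \<in> ?Z" for z
  proof -
    obtain x x' where z: "z = (\<Sum>j\<in>S. \<bar>A x j - A x' j\<bar>)" and x: "x \<in> S" and x': "x' \<in> S"
      using \<open>z \<in> ?Z\<close> by auto
    have "z = (\<Sum>j\<in>S. A x j + A x' j - 2 * min (A x j) (A x' j))"
      unfolding z by (intro sum.cong refl) (auto simp: min_def)
    also have "\<dots> = 2 - 2 * (\<Sum>j\<in>S. min (A x j) (A x' j))"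
      using rs[OF x] rs[OF x'] by (simp add: sum.distrib sum_subtractf sum_distrib_left)
    also have "\<dots> < 2"
    proof -
      have le: "min (A x y0) (A x' y0) \<le> (\<Sum>j\<in>S. min (A x j) (A x' j))"
        using fin y0 nn x x' by (intro member_le_sum) auto
      have m: "min (A x y0) (A x' y0) > 0" using pos x x' by simp
      from le m show ?thesis by linarith
    qed
    finally show ?thesis .
  qed
  have "Max ?Z < 2" using f ne lt by (simp add: Max_less_iff)
  then show ?thesis unfolding dob_tau_def by simp
qed

lemma tau_contract:
  fixes v :: "'a \<Rightarrow> real"
  assumes fin: "finite S" and v0: "(\<Sum>x\<in>S. v x) = 0"
  shows "vec_norm1 S (\<lambda>y. \<Sum>x\<in>S. v x * A x y) \<le> dob_tau S A * vec_norm1 S v"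
proof -
  define vp where "vp x = max (v x) 0" for x
  define vm where "vm x = max (- v x) 0" for x
  have vpm: "v x = vp x - vm x" "\<bar>v x\<bar> = vp x + vm x" "vp x \<ge> 0" "vm x \<ge> 0" for x
    unfolding vp_def vm_def by auto
  define s where "s = (\<Sum>x\<in>S. vp x)"
  have s': "(\<Sum>x\<in>S. vm x) = s"
    using v0 unfolding s_def vpm(1) by (simp add: sum_subtractf)
  have nv: "vec_norm1 S v = 2 * s" unfolding vec_norm1_def vpm(2) using s' s_def by (simp add: sum.distrib)
  have s0: "s \<ge> 0" unfolding s_def using vpm by (simp add: sum_nonneg)
  show ?thesis
  proof (cases "s = 0")
    case True
    have "vp x = 0" if "x \<in> S" for x
      using True fin that vpm(3) unfolding s_def by (simp add: sum_nonneg_eq_0_iff)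
    moreover have "vm x = 0" if "x \<in> S" for x
      using True s' fin that vpm(4) by (simp add: sum_nonneg_eq_0_iff)
    ultimately have "v x = 0" if "x \<in> S" for x using vpm(1) that by simp
    then show ?thesis unfolding vec_norm1_def by simp
  next
    case False
    then have spos: "s > 0" using s0 by simp
    have key: "(\<Sum>x\<in>S. v x * A x y) = (1 / s) * (\<Sum>x\<in>S. \<Sum>x'\<in>S. vp x * vm x' * (A x y - A x' y))" for y
    proof -
      have "(\<Sum>x\<in>S. \<Sum>x'\<in>S. vp x * vm x' * (A x y - A x' y))
          = (\<Sum>x\<in>S. vp x * A x y) * (\<Sum>x'\<in>S. vm x') - (\<Sum>x\<in>S. vp x) * (\<Sum>x'\<in>S. vm x' * A x' y)"
        by (simp add: sum_product algebra_simps sum_subtractf, rule sum.swap)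
      also have "\<dots> = s * (\<Sum>x\<in>S. v x * A x y)"
        unfolding vpm(1) s' s_def[symmetric] by (simp add: algebra_simps sum_subtractf)
      finally show ?thesis using spos by simp
    qed
    have "vec_norm1 S (\<lambda>y. \<Sum>x\<in>S. v x * A x y)
        \<le> (\<Sum>y\<in>S. (1 / s) * (\<Sum>x\<in>S. \<Sum>x'\<in>S. vp x * vm x' * \<bar>A x y - A x' y\<bar>))"
      unfolding vec_norm1_def key
    proof (intro sum_mono)
      fix y
      have "\<bar>(1 / s) * (\<Sum>x\<in>S. \<Sum>x'\<in>S. vp x * vm x' * (A x y - A x' y))\<bar>
          = (1 / s) * \<bar>\<Sum>x\<in>S. \<Sum>x'\<in>S. vp x * vm x' * (A x y - A x' y)\<bar>" using spos by (simp add: abs_mult)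
      also have "\<dots> \<le> (1 / s) * (\<Sum>x\<in>S. \<Sum>x'\<in>S. vp x * vm x' * \<bar>A x y - A x' y\<bar>)"
      proof (intro mult_left_mono)
        show "\<bar>\<Sum>x\<in>S. \<Sum>x'\<in>S. vp x * vm x' * (A x y - A x' y)\<bar> \<le> (\<Sum>x\<in>S. \<Sum>x'\<in>S. vp x * vm x' * \<bar>A x y - A x' y\<bar>)"
          by (rule order_trans[OF sum_abs], intro sum_mono, rule order_trans[OF sum_abs])
            (simp add: abs_mult vpm(3,4))
      qed (use spos in simp)
      finally show "\<bar>(1 / s) * (\<Sum>x\<in>S. \<Sum>x'\<in>S. vp x * vm x' * (A x y - A x' y))\<bar> \<le> \<dots>" .
    qed
    also have "\<dots> = (1 / s) * (\<Sum>x\<in>S. \<Sum>x'\<in>S. vp x * vm x' * (\<Sum>y\<in>S. \<bar>A x y - A x' y\<bar>))"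
    proof -
      have "(\<Sum>y\<in>S. (1 / s) * (\<Sum>x\<in>S. \<Sum>x'\<in>S. vp x * vm x' * \<bar>A x y - A x' y\<bar>))
          = (1 / s) * (\<Sum>y\<in>S. \<Sum>x\<in>S. \<Sum>x'\<in>S. vp x * vm x' * \<bar>A x y - A x' y\<bar>)"
        by (rule sum_distrib_left[symmetric])
      also have "(\<Sum>y\<in>S. \<Sum>x\<in>S. \<Sum>x'\<in>S. vp x * vm x' * \<bar>A x y - A x' y\<bar>)
          = (\<Sum>x\<in>S. \<Sum>y\<in>S. \<Sum>x'\<in>S. vp x * vm x' * \<bar>A x y - A x' y\<bar>)"
        by (rule sum.swap)
      also have "\<dots> = (\<Sum>x\<in>S. \<Sum>x'\<in>S. \<Sum>y\<in>S. vp x * vm x' * \<bar>A x y - A x' y\<bar>)"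
        by (intro sum.cong refl sum.swap)
      also have "\<dots> = (\<Sum>x\<in>S. \<Sum>x'\<in>S. vp x * vm x' * (\<Sum>y\<in>S. \<bar>A x y - A x' y\<bar>))"
        by (intro sum.cong refl sum_distrib_left[symmetric])
      finally show ?thesis .
    qed
    also have "\<dots> \<le> (1 / s) * (\<Sum>x\<in>S. \<Sum>x'\<in>S. vp x * vm x' * (2 * dob_tau S A))"
    proof -
      have "(\<Sum>x\<in>S. \<Sum>x'\<in>S. vp x * vm x' * (\<Sum>y\<in>S. \<bar>A x y - A x' y\<bar>))
          \<le> (\<Sum>x\<in>S. \<Sum>x'\<in>S. vp x * vm x' * (2 * dob_tau S A))"
      proof (intro sum_mono)
        fix x x' assume "x \<in> S" "x' \<in> S"
        then show "vp x * vm x' * (\<Sum>y\<in>S. \<bar>A x y - A x' y\<bar>) \<le> vp x * vm x' * (2 * dob_tau S A)"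
          using tau_bound[OF fin] vpm(3,4) by (intro mult_left_mono) auto
      qed
      then show ?thesis using spos by (intro mult_left_mono) auto
    qed
    also have "\<dots> = (1 / s) * (s * s * (2 * dob_tau S A))"
    proof -
      have "(\<Sum>x\<in>S. \<Sum>x'\<in>S. vp x * vm x' * (2 * dob_tau S A)) = (\<Sum>x\<in>S. vp x) * (\<Sum>x'\<in>S. vm x') * (2 * dob_tau S A)"
        by (simp add: sum_distrib_left sum_distrib_right mult.assoc, rule sum.swap)
      then show ?thesis unfolding s' s_def[symmetric] by simp
    qed
    also have "\<dots> = dob_tau S A * vec_norm1 S v" using spos nv by (simp add: field_simps)
    finally show ?thesis .
  qed
qed

lemma P_pos_pow:
  assumes N: "N \<ge> 1" and rs: "row_stochastic {1..K} T"
    and x: "x \<in> configs N K"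
  shows "y \<in> configs N K \<Longrightarrow> (\<forall>n\<in>{1..N}. matpow {1..K} T m (x n) (y n) > 0)
     \<Longrightarrow> matpow (configs N K) (global_P N nv T) m x y > 0"
proof (induction m arbitrary: y)
  case 0
  have "x n = y n" if "n \<in> {1..N}" for n using 0(2) that by (auto split: if_splits)
  then have "x = y" using x 0(1) unfolding configs_def by (intro PiE_ext) auto
  then show ?case by simp
next
  case (Suc m)
  let ?S = "configs N K"
  have Tnn: "\<And>i j. i \<in> {1..K} \<Longrightarrow> j \<in> {1..K} \<Longrightarrow> 0 \<le> T i j"
    using rs unfolding row_stochastic_def by blast
  have ex: "\<exists>k\<in>{1..K}. matpow {1..K} T m (x n) k > 0 \<and> T k (y n) > 0" if n: "n \<in> {1..N}" for n
  proof (rule ccontr)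
    assume "\<not> ?thesis"
    then have nt: "\<And>k. k \<in> {1..K} \<Longrightarrow> \<not> (matpow {1..K} T m (x n) k > 0 \<and> T k (y n) > 0)" by blast
    have "\<forall>k\<in>{1..K}. matpow {1..K} T m (x n) k * T k (y n) \<le> 0"
    proof
      fix k assume k: "k \<in> {1..K}"
      have a: "0 \<le> matpow {1..K} T m (x n) k" using matpow_nonneg[OF Tnn k] .
      have b: "0 \<le> T k (y n)" using Tnn k configs_mem[OF Suc(2) n] by blast
      have "matpow {1..K} T m (x n) k = 0 \<or> T k (y n) = 0" using a b nt[OF k] by linarith
      then show "matpow {1..K} T m (x n) k * T k (y n) \<le> 0" by auto
    qed
    then have "matpow {1..K} T (Suc m) (x n) (y n) \<le> 0" by (simp only: matpow.simps) (rule sum_nonpos, blast)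
    then show False using Suc(3) n by (meson not_less)
  qed
  then have "\<forall>n\<in>{1..N}. \<exists>k. k \<in> {1..K} \<and> matpow {1..K} T m (x n) k > 0 \<and> T k (y n) > 0" by blast
  from bchoice[OF this] obtain kf where kf0: "\<forall>n\<in>{1..N}. kf n \<in> {1..K} \<and> matpow {1..K} T m (x n) (kf n) > 0 \<and> T (kf n) (y n) > 0"
    by blast
  then have kf: "\<And>n. n \<in> {1..N} \<Longrightarrow> kf n \<in> {1..K} \<and> matpow {1..K} T m (x n) (kf n) > 0 \<and> T (kf n) (y n) > 0"
    by blast
  define z where "z = restrict kf {1..N}"
  have z: "z \<in> ?S" unfolding z_def configs_def using kf by auto
  have zn: "z n = kf n" if "n \<in> {1..N}" for n unfolding z_def using that by simp
  have mz: "matpow ?S (global_P N nv T) m x z > 0" using Suc.IH[OF z] kf zn by auto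
  have Pz: "global_P N nv T z y > 0"
    unfolding global_P_avg
  proof (intro prod_pos)
    fix n assume n: "n \<in> {1..N}"
    have "0 < T (z n) (y n)" using kf[OF n] zn[OF n] by simp
    also have "\<dots> \<le> (\<Sum>i\<in>cyc_nbhd N nv n. T (z i) (y n))"
      using V_props[OF N rs z n] cyc_self[OF n] Tnn configs_mem[OF Suc(2) n]
      by (intro member_le_sum) auto
    finally have "0 < (\<Sum>i\<in>cyc_nbhd N nv n. T (z i) (y n))" .
    then show "0 < avgT N nv T z n (y n)" unfolding avgT_def using V_props[OF N rs z n] by simp
  qed
  have Pnn: "\<And>i j. i \<in> ?S \<Longrightarrow> j \<in> ?S \<Longrightarrow> 0 \<le> global_P N nv T i j"
    using global_P_nonneg[OF N rs] by blast
  have "0 < matpow ?S (global_P N nv T) m x z * global_P N nv T z y" using mz Pz by simp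
  also have "\<dots> \<le> (\<Sum>z'\<in>?S. matpow ?S (global_P N nv T) m x z' * global_P N nv T z' y)"
  proof (rule member_le_sum[OF z _ configs_fin])
    fix z' assume "z' \<in> ?S - {z}"
    then have z': "z' \<in> ?S" by simp
    have "0 \<le> matpow ?S (global_P N nv T) m x z'" by (rule matpow_nonneg[OF Pnn z'])
    moreover have "0 \<le> global_P N nv T z' y" by (rule Pnn[OF z' Suc(2)])
    ultimately show "0 \<le> matpow ?S (global_P N nv T) m x z' * global_P N nv T z' y" by simp
  qed
  finally show ?case by simp
qed

theorem theorem3p5:
  fixes N K nv :: nat
    and T1 T2 :: "nat \<Rightarrow> nat \<Rightarrow> real"
    and pi1 pi2 :: "(nat \<Rightarrow> nat) \<Rightarrow> real"
  assumes N: "N \<ge> 1" and K: "K \<ge> 1"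
    and T1: "row_stochastic {1..K} T1" "irreducible_mat {1..K} T1" "aperiodic_mat {1..K} T1"
    and T2: "row_stochastic {1..K} T2" "irreducible_mat {1..K} T2" "aperiodic_mat {1..K} T2"
    and pi1: "stationary (configs N K) (global_P N nv T1) pi1"
    and pi2: "stationary (configs N K) (global_P N nv T2) pi2"
  defines "S \<equiv> configs N K"
    and "P1 \<equiv> global_P N nv T1"
    and "P2 \<equiv> global_P N nv T2"
    and "D \<equiv> (\<lambda>i j. T1 i j - T2 i j)"
    and "DP \<equiv> (\<lambda>x y. global_P N nv T1 x y - global_P N nv T2 x y)"
    and "CK \<equiv> max (Max ((\<lambda>j. \<Sum>k\<in>{1..K}. (T1 j k)\<^sup>2) ` {1..K}))
                   (Max ((\<lambda>j. \<Sum>k\<in>{1..K}. (T2 j k)\<^sup>2) ` {1..K}))"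
    and "B \<equiv> real N * real K ^ (N - 1) *
               min (ent_norm1 {1..K} (\<lambda>i j. T1 i j - T2 i j))
                   (real K * norm11 {1..K} (\<lambda>i j. T1 i j - T2 i j))"
  shows "ent_norm1 S DP \<le> B
    \<and> CK \<le> 1
    \<and> ent_norm2 S DP \<le> real N * (real K * CK) powr (real N / 2) * ent_norm2 {1..K} D
    \<and> (\<exists>l0::nat. l0 \<ge> 1 \<and> dob_tau S (matpow S P1 l0) < 1
         \<and> vec_norm1 S (\<lambda>x. pi1 x - pi2 x)
             \<le> (1 + (real l0 - 1) * real K ^ N) / (1 - dob_tau S (matpow S P1 l0)) * ent_norm1 S DP
         \<and> (1 + (real l0 - 1) * real K ^ N) / (1 - dob_tau S (matpow S P1 l0)) * ent_norm1 S DP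
             \<le> (1 + (real l0 - 1) * real K ^ N) / (1 - dob_tau S (matpow S P1 l0)) * B)"
proof -
  have r1: "row_stochastic {1..K} T1" by (rule T1(1))
  have r2: "row_stochastic {1..K} T2" by (rule T2(1))
  have fS: "finite S" unfolding S_def by (rule configs_fin)
  have P1nn: "\<And>i j. i \<in> S \<Longrightarrow> j \<in> S \<Longrightarrow> 0 \<le> P1 i j"
    unfolding S_def P1_def using global_P_nonneg[OF N r1] by blast
  have P1rs: "\<And>i. i \<in> S \<Longrightarrow> (\<Sum>j\<in>S. P1 i j) = 1"
    unfolding S_def P1_def using global_P_rowsum[OF N r1] by blast
  have c1: "ent_norm1 S DP \<le> B"
  proof -
    have a: "ent_norm1 S DP \<le> real N * real K ^ (N - 1) * ent_norm1 {1..K} (\<lambda>i j. T1 i j - T2 i j)"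
      and b: "ent_norm1 S DP \<le> real N * real K ^ (N - 1) * (real K * norm11 {1..K} (\<lambda>i j. T1 i j - T2 i j))"
      unfolding S_def DP_def using claim1[OF N r1 r2] by auto
    have "real N * real K ^ (N - 1) * min (ent_norm1 {1..K} (\<lambda>i j. T1 i j - T2 i j))
                   (real K * norm11 {1..K} (\<lambda>i j. T1 i j - T2 i j))
        = min (real N * real K ^ (N - 1) * ent_norm1 {1..K} (\<lambda>i j. T1 i j - T2 i j))
              (real N * real K ^ (N - 1) * (real K * norm11 {1..K} (\<lambda>i j. T1 i j - T2 i j)))"
      by (simp add: min_mult_distrib_left)
    then show ?thesis unfolding B_def using a b by simp
  qed
  have K1: "(1::nat) \<in> {1..K}" using K by simp
  have fK: "finite ((\<lambda>j. \<Sum>k\<in>{1..K}. (T1 j k)\<^sup>2) ` {1..K})" "finite ((\<lambda>j. \<Sum>k\<in>{1..K}. (T2 j k)\<^sup>2) ` {1..K})" by auto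
  have neK: "(\<lambda>j. \<Sum>k\<in>{1..K}. (T1 j k)\<^sup>2) ` {1..K} \<noteq> {}" "(\<lambda>j. \<Sum>k\<in>{1..K}. (T2 j k)\<^sup>2) ` {1..K} \<noteq> {}"
    using K1 by auto
  have c2: "CK \<le> 1"
    unfolding CK_def using rowsq_le1[OF r1] rowsq_le1[OF r2] fK neK by (simp add: Max_le_iff)
  have C1: "\<And>j. j \<in> {1..K} \<Longrightarrow> (\<Sum>k\<in>{1..K}. (T1 j k)\<^sup>2) \<le> CK"
  proof -
    fix j assume j: "j \<in> {1..K}"
    show "(\<Sum>k\<in>{1..K}. (T1 j k)\<^sup>2) \<le> CK"
      unfolding CK_def by (rule max.coboundedI1, rule Max_ge[OF fK(1)]) (use j in simp)
  qed
  have C2: "\<And>j. j \<in> {1..K} \<Longrightarrow> (\<Sum>k\<in>{1..K}. (T2 j k)\<^sup>2) \<le> CK"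
  proof -
    fix j assume j: "j \<in> {1..K}"
    show "(\<Sum>k\<in>{1..K}. (T2 j k)\<^sup>2) \<le> CK"
      unfolding CK_def by (rule max.coboundedI2, rule Max_ge[OF fK(2)]) (use j in simp)
  qed
  have KC: "real K * CK \<ge> 1"
  proof -
    have "1 \<le> real K * (\<Sum>k\<in>{1..K}. (T1 1 k)\<^sup>2)" by (rule rowsq_ge[OF r1 K1])
    also have "\<dots> \<le> real K * CK" using C1[OF K1] by (intro mult_left_mono) auto
    finally show ?thesis .
  qed
  have c3: "ent_norm2 S DP \<le> real N * (real K * CK) powr (real N / 2) * ent_norm2 {1..K} D"
    unfolding S_def DP_def D_def by (rule claim3[OF N r1 r2 C1 C2 KC])
  obtain l where l1: "l \<ge> 1" and lpos: "\<forall>i\<in>{1..K}. matpow {1..K} T1 l i 1 > 0"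
    using primitive_col[OF K T1] by blast
  define y0 where "y0 = restrict (\<lambda>_. 1::nat) {1..N}"
  have y0: "y0 \<in> S" unfolding y0_def S_def configs_def using K by auto
  define A where "A = matpow S P1 l"
  have Apos: "A x y0 > 0" if x: "x \<in> S" for x
  proof -
    have "\<forall>n\<in>{1..N}. matpow {1..K} T1 l (x n) (y0 n) > 0"
      using lpos configs_mem[of x N K] x unfolding y0_def S_def by auto
    moreover have xS: "x \<in> configs N K" using x unfolding S_def .
    moreover have y0S: "y0 \<in> configs N K" using y0 unfolding S_def .
    ultimately show ?thesis unfolding A_def S_def P1_def
      using P_pos_pow[OF N r1 xS y0S] by simp
  qed
  have Ann: "0 \<le> A i j" if "i \<in> S" "j \<in> S" for i j
    unfolding A_def by (rule matpow_nonneg[OF P1nn that(2)])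
  have Ars: "(\<Sum>j\<in>S. A i j) = 1" if "i \<in> S" for i
    unfolding A_def by (rule matpow_rowsum[OF fS P1nn P1rs that])
  have tau1: "dob_tau S A < 1"
    apply (rule tau_lt1[where S=S and A=A])
    apply (rule fS)
    apply (rule Ann, assumption, assumption)
    apply (rule Ars, assumption)
    apply (rule y0)
    apply (rule Apos, assumption)
    done
  have st1: "stationary S P1 pi1" using pi1 unfolding S_def P1_def .
  have st2: "stationary S P2 pi2" using pi2 unfolding S_def P2_def .
  define v where "v x = pi1 x - pi2 x" for x
  have v0: "(\<Sum>x\<in>S. v x) = 0" unfolding v_def using st1 st2 by (simp add: sum_subtractf stationary_def)
  define w where "w y = (\<Sum>x\<in>S. pi2 x * A x y)" for y
  have vA: "(\<Sum>x\<in>S. v x * A x y) = pi1 y - w y" if y: "y \<in> S" for y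
    unfolding v_def w_def A_def using stat_pow[OF fS st1 y, where m=l]
    by (simp add: left_diff_distrib sum_subtractf)
  have pw: "vec_norm1 S (\<lambda>y. w y - pi2 y) \<le> real l * ent_norm1 S DP"
    unfolding w_def A_def DP_def
    using pert_pow[OF fS P1nn P1rs st2, where m=l] unfolding P1_def P2_def .
  have "vec_norm1 S v \<le> vec_norm1 S (\<lambda>y. \<Sum>x\<in>S. v x * A x y) + vec_norm1 S (\<lambda>y. w y - pi2 y)"
    unfolding vec_norm1_def
  proof (subst sum.distrib[symmetric], intro sum_mono)
    fix y assume y: "y \<in> S"
    have "v y = (\<Sum>x\<in>S. v x * A x y) + (w y - pi2 y)" using vA[OF y] unfolding v_def by simp
    then have "\<bar>v y\<bar> = \<bar>(\<Sum>x\<in>S. v x * A x y) + (w y - pi2 y)\<bar>" by simp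
    also have "\<dots> \<le> \<bar>\<Sum>x\<in>S. v x * A x y\<bar> + \<bar>w y - pi2 y\<bar>" by (rule abs_triangle_ineq)
    finally show "\<bar>v y\<bar> \<le> \<bar>\<Sum>x\<in>S. v x * A x y\<bar> + \<bar>w y - pi2 y\<bar>" .
  qed
  also have "\<dots> \<le> dob_tau S A * vec_norm1 S v + real l * ent_norm1 S DP"
    using tau_contract[OF fS v0, where A=A] pw by simp
  finally have vv: "(1 - dob_tau S A) * vec_norm1 S v \<le> real l * ent_norm1 S DP" by (simp add: algebra_simps)
  have KN: "real K ^ N \<ge> 1" using K by simp
  have lc: "real l \<le> 1 + (real l - 1) * real K ^ N"
  proof -
    have "(real l - 1) * 1 \<le> (real l - 1) * real K ^ N" using l1 KN by (intro mult_left_mono) auto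
    then show ?thesis by simp
  qed
  have DP0: "0 \<le> ent_norm1 S DP" unfolding ent_norm1_def by (intro sum_nonneg) auto
  have t0: "0 < 1 - dob_tau S A" using tau1 by simp
  have c4: "vec_norm1 S (\<lambda>x. pi1 x - pi2 x)
      \<le> (1 + (real l - 1) * real K ^ N) / (1 - dob_tau S A) * ent_norm1 S DP"
  proof -
    have "vec_norm1 S v \<le> real l * ent_norm1 S DP / (1 - dob_tau S A)"
      using vv t0 by (simp add: pos_le_divide_eq mult.commute)
    also have "\<dots> \<le> (1 + (real l - 1) * real K ^ N) * ent_norm1 S DP / (1 - dob_tau S A)"
      using lc DP0 t0 by (intro divide_right_mono mult_right_mono) auto
    finally show ?thesis unfolding v_def by simp
  qed
  have coef0: "0 \<le> (1 + (real l - 1) * real K ^ N) / (1 - dob_tau S A)"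
    using t0 l1 KN by (intro divide_nonneg_pos) auto
  have c5: "(1 + (real l - 1) * real K ^ N) / (1 - dob_tau S A) * ent_norm1 S DP
      \<le> (1 + (real l - 1) * real K ^ N) / (1 - dob_tau S A) * B"
    using c1 coef0 by (rule mult_left_mono)
  have c45: "\<exists>l0::nat. l0 \<ge> 1 \<and> dob_tau S (matpow S P1 l0) < 1
         \<and> vec_norm1 S (\<lambda>x. pi1 x - pi2 x)
             \<le> (1 + (real l0 - 1) * real K ^ N) / (1 - dob_tau S (matpow S P1 l0)) * ent_norm1 S DP
         \<and> (1 + (real l0 - 1) * real K ^ N) / (1 - dob_tau S (matpow S P1 l0)) * ent_norm1 S DP
             \<le> (1 + (real l0 - 1) * real K ^ N) / (1 - dob_tau S (matpow S P1 l0)) * B"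
    apply (rule exI[of _ l])
    using l1 tau1 c4 c5 unfolding A_def by (intro conjI)
  show ?thesis using c1 c2 c3 c45 by (intro conjI)
qed

end
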